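(* Let $q,q^\dagger\in[1,2]$, $s,s'\in\mathbb R$, and let $u^\dagger\in B^{s^\dagger,q^\dagger}(\mathcal Z)$ for some $s^\dagger>s'$. Then as $\epsilon\to0$: (i) If $q^\dagger\ge q$ (with $s^\dagger>s'$): $$\inf_{h\in B^{s,q}(\mathcal Z):\|h-u^\dagger\|_{s',q}\le\epsilon}\|h\|_{s,q}^q\lesssim\begin{cases}1,& s<s^\dagger,\\ (-\log\epsilon)^{1-\frac q{q^\dagger}},& s=s^\dagger,\\ \epsilon^{-\frac{s-s^\dagger}{s^\dagger-s'}(q\wedge q^\dagger)},& s>s^\dagger.\end{cases}$$ (ii) If $q^\dagger<q$, assume in addition $u^\dagger\in B^{s^\dagger,q^\dagger,q}(\mathcal Z)$ and $s^\dagger>s'-\frac dq+\frac d{q^\dagger}$; then $$\inf_{h\in B^{s,q}(\mathcal Z):\|h-u^\dagger\|_{s',q}\le\epsilon}\|h\|_{s,q}^q\lesssim\begin{cases}1,& s\le s^\dagger+\frac dq-\frac d{q^\dagger},\\ \epsilon^{-\frac{\frac{s-s^\dagger}d-\frac1q+\frac1{q^\dagger}}{\frac{s^\dagger-s'}d+\frac1q-\frac1{q^\dagger}}q},& s>s^\dagger+\frac dq-\frac d{q^\dagger}.\end{cases}$$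
   Context: Let $d\ge1$, $\mathcal X\subset\mathbb R^d$ with a fixed basis $\{\phi_\ell\}$, $\mathcal T\subset[0,T]$ bounded, $\mathcal Z=\mathcal X\times\mathcal T$; functions on $\mathcal Z$ are written $u(\mathbf x,t)=\sum_\ell u_\ell(t)\phi_\ell(\mathbf x)$. For $p\ge1$, $\|u_\ell\|_p$ is the $L^p(\mathcal T)$ norm of the temporal coefficient. For $r,p\ge1$, $\tau_r(s)=\frac sd+\frac12-\frac1r$, $\|u\|_{s,r,p}=(\sum_\ell\ell^{\tau_r(s)r}\|u_\ell\|_p^r)^{1/r}$, $B^{s,r,p}(\mathcal Z)=\{u:\|u\|_{s,r,p}<\infty\}$, and $\|\cdot\|_{s,r}=\|\cdot\|_{s,r,r}$, $B^{s,r}(\mathcal Z)=B^{s,r,r}(\mathcal Z)$. $a\wedge b=\min\{a,b\}$; $\lesssim$ means up to a constant independent of $\epsilon$. *)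

theory Defs
  imports "HOL-Analysis.Analysis"
begin

text \<open>A function u(x,t) = sum_l u_l(t) phi_l(x) on Z = X x T is represented by its
  sequence of temporal coefficients u :: nat => real => real (index l >= 1; u 0 is unused).\<close>

definition Lp_pow :: "real \<Rightarrow> real set \<Rightarrow> (real \<Rightarrow> real) \<Rightarrow> ennreal" where
  "Lp_pow p T f = (\<integral>\<^sup>+ t\<in>T. ennreal (\<bar>f t\<bar> powr p) \<partial>lborel)"

definition in_Lp :: "real \<Rightarrow> real set \<Rightarrow> (real \<Rightarrow> real) \<Rightarrow> bool" where
  "in_Lp p T f \<longleftrightarrow> set_borel_measurable lborel T f \<and> Lp_pow p T f < \<infinity>"

definition Lp_norm :: "real \<Rightarrow> real set \<Rightarrow> (real \<Rightarrow> real) \<Rightarrow> real" where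
  "Lp_norm p T f = (enn2real (Lp_pow p T f)) powr (1 / p)"

definition tau :: "nat \<Rightarrow> real \<Rightarrow> real \<Rightarrow> real" where
  "tau d r s = s / real d + 1/2 - 1/r"

definition besov_term :: "nat \<Rightarrow> real set \<Rightarrow> real \<Rightarrow> real \<Rightarrow> real \<Rightarrow> (nat \<Rightarrow> real \<Rightarrow> real) \<Rightarrow> nat \<Rightarrow> real" where
  "besov_term d T s r p u l = real l powr (tau d r s * r) * (Lp_norm p T (u l)) powr r"

definition besov_norm :: "nat \<Rightarrow> real set \<Rightarrow> real \<Rightarrow> real \<Rightarrow> real \<Rightarrow> (nat \<Rightarrow> real \<Rightarrow> real) \<Rightarrow> real" where
  "besov_norm d T s r p u = (\<Sum>n. besov_term d T s r p u (Suc n)) powr (1 / r)"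

definition besov :: "nat \<Rightarrow> real set \<Rightarrow> real \<Rightarrow> real \<Rightarrow> real \<Rightarrow> (nat \<Rightarrow> real \<Rightarrow> real) set" where
  "besov d T s r p = {u. (\<forall>l\<ge>1. in_Lp p T (u l)) \<and> summable (\<lambda>n. besov_term d T s r p u (Suc n))}"

definition admissible :: "nat \<Rightarrow> real set \<Rightarrow> real \<Rightarrow> real \<Rightarrow> real \<Rightarrow> (nat \<Rightarrow> real \<Rightarrow> real) \<Rightarrow> real \<Rightarrow> (nat \<Rightarrow> real \<Rightarrow> real) set" where
  "admissible d T s s' q u eps =
     {h \<in> besov d T s q q. (\<lambda>l t. h l t - u l t) \<in> besov d T s' q q \<and>
        besov_norm d T s' q q (\<lambda>l t. h l t - u l t) \<le> eps}"

end

theory Submission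
  imports Defs
begin


lemma amgm_scaled:
  fixes x y th P :: real
  assumes "0 \<le> x" "0 \<le> y" "0 < th" "th < 1" "0 < P"
  shows "x powr th * y powr (1-th) \<le> P powr (1-th) * x + P powr (-th) * y"
proof (cases "x = 0 \<or> y = 0")
  case True
  then show ?thesis using assms by auto
next
  case False
  then have xy: "x > 0" "y > 0" using assms by auto
  define a where "a = P powr (1-th) * x"
  define b where "b = P powr (-th) * y"
  have ab: "a > 0" "b > 0" using xy assms by (auto simp: a_def b_def)
  have "a powr th * b powr (1-th) \<le> th * a + (1-th) * b"
    using Youngs_inequality_0[of th "1-th" a b] assms ab by auto
  also have "\<dots> \<le> a + b"
  proof -
    have "th * a \<le> a" "(1-th) * b \<le> b" using ab assms by (auto intro!: mult_left_le_one_le)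
    then show ?thesis by linarith
  qed
  also have "a powr th * b powr (1-th) = x powr th * y powr (1-th)"
  proof -
    have "a powr th * b powr (1-th) = (P powr (1-th)) powr th * x powr th * ((P powr (-th)) powr (1-th) * y powr (1-th))"
      unfolding a_def b_def using xy assms by (simp add: powr_mult)
    also have "\<dots> = (P powr ((1-th)*th) * P powr (-th*(1-th))) * (x powr th * y powr (1-th))"
      by (simp add: powr_powr)
    also have "P powr ((1-th)*th) * P powr (-th*(1-th)) = 1"
      using assms by (simp add: powr_add[symmetric])
    finally show ?thesis by simp
  qed
  finally show ?thesis by (simp add: a_def b_def)
qed

lemma ineq_concave:
  fixes l rho :: real
  assumes "l \<ge> 1" "0 < rho" "rho \<le> 1"
  shows "rho * l powr (rho - 1) \<le> l powr rho - (l - 1) powr rho"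
proof (cases "l = 1")
  case True then show ?thesis using assms by simp
next
  case False
  then have l: "l > 1" using assms by auto
  have "(l-1) powr rho * l powr (1-rho) \<le> rho * (l-1) + (1-rho) * l"
    using Youngs_inequality_0[of rho "1-rho" "l-1" l] assms l by auto
  then have "(l-1) powr rho * l powr (1-rho) * l powr (rho-1) \<le> (l - rho) * l powr (rho-1)"
    using l by (intro mult_right_mono) (auto simp: algebra_simps)
  moreover have "l powr (1-rho) * l powr (rho-1) = 1" using l by (simp add: powr_add[symmetric])
  moreover have "l * l powr (rho-1) = l powr rho" using l by (simp add: powr_mult_base)
  ultimately have "(l-1) powr rho \<le> (l - rho) * l powr (rho-1)"
    by (metis mult.assoc mult_1_right)
  also have "\<dots> = l powr rho - rho * l powr (rho - 1)"
    using \<open>l * l powr (rho-1) = l powr rho\<close> by (simp add: algebra_simps)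
  finally show ?thesis by simp
qed

lemma ineq_ln:
  fixes l :: real
  assumes "l > 1"
  shows "1 / l \<le> ln l - ln (l - 1)"
proof -
  have "ln ((l-1)/l) \<le> (l-1)/l - 1" using assms by (intro ln_le_minus_one) auto
  also have "(l-1)/l - 1 = - (1/l)" using assms by (simp add: field_simps)
  finally show ?thesis using assms by (simp add: ln_div)
qed

lemma ineq_convex:
  fixes l rho :: real
  assumes "l > 1" "0 < rho"
  shows "rho * l powr (-1 - rho) \<le> (l - 1) powr (-rho) - l powr (-rho)"
proof -
  have L: "1 / l \<le> ln l - ln (l - 1)" using ineq_ln assms by auto
  have "(l-1) powr (-rho) = exp (-rho * ln l) * exp (rho * (ln l - ln (l-1)))"
    using assms by (simp add: powr_def exp_add[symmetric] algebra_simps)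
  also have "exp (rho * (ln l - ln (l-1))) \<ge> 1 + rho * (1/l)"
  proof -
    have "1 + rho * (1/l) \<le> 1 + rho * (ln l - ln (l-1))" using L assms by (intro add_left_mono mult_left_mono) auto
    also have "\<dots> \<le> exp (rho * (ln l - ln (l-1)))" by (rule exp_ge_add_one_self)
    finally show ?thesis .
  qed
  then have A: "(l-1) powr (-rho) \<ge> l powr (-rho) * (1 + rho * (1/l))"
    using \<open>(l-1) powr (-rho) = _\<close> assms by (simp add: powr_def mult_left_mono)
  have C: "l powr (-rho) * (1/l) = l powr (-1-rho)" using assms
    by (simp add: powr_diff powr_minus divide_simps)
  then have B: "l powr (-rho) * (1 + rho * (1/l)) = l powr (-rho) + rho * l powr (-1-rho)"
    by (simp only: C[symmetric]) (simp add: algebra_simps)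
  show ?thesis using A B by linarith
qed



lemma sum_cond_eq:
  "(\<Sum>n<K. if Suc n \<le> N then f (Suc n) else (0::real)) = (\<Sum>n<min K N. f (Suc n))"
proof (induction K)
  case 0 then show ?case by simp
next
  case (Suc K)
  show ?case
  proof (cases "Suc K \<le> N")
    case True
    then have "min (Suc K) N = Suc (min K N)" by simp
    then show ?thesis using Suc True by simp
  next
    case False
    then have "min (Suc K) N = min K N" by simp
    then show ?thesis using Suc False by simp
  qed
qed

lemma sum_cond_le:
  assumes "\<And>n. 0 \<le> f n"
  shows "(\<Sum>n<K. if Suc n \<le> N then f (Suc n) else (0::real)) \<le> (\<Sum>n<N. f (Suc n))"
  unfolding sum_cond_eq using assms by (intro sum_mono2) auto

lemma harm_bound:
  assumes "N \<ge> 1"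
  shows "(\<Sum>n<N. 1 / real (Suc n)) \<le> 1 + ln (real N)"
  using assms
proof (induction N rule: dec_induct)
  case base then show ?case by simp
next
  case (step N)
  have "1 / real (Suc N) \<le> ln (real (Suc N)) - ln (real (Suc N) - 1)"
    using step by (intro ineq_ln) auto
  then show ?case using step by simp
qed

lemma head_pow:
  assumes "0 < rho"
  shows "(\<Sum>n<N. real (Suc n) powr (rho - 1)) \<le> (1 + 1/rho) * real N powr rho"
proof (cases "rho \<le> 1")
  case True
  have "(\<Sum>n<N. real (Suc n) powr (rho - 1)) \<le> real N powr rho / rho"
  proof (induction N)
    case 0 then show ?case using assms by simp
  next
    case (Suc N)
    have "rho * real (Suc N) powr (rho - 1) \<le> real (Suc N) powr rho - (real (Suc N) - 1) powr rho"
      using assms True by (intro ineq_concave) auto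
    then have "real (Suc N) powr (rho - 1) \<le> (real (Suc N) powr rho - real N powr rho) / rho"
      using assms by (simp add: field_simps)
    then show ?case using Suc by (simp add: diff_divide_distrib)
  qed
  also have "\<dots> \<le> (1 + 1/rho) * real N powr rho"
    using assms mult_nonneg_nonneg[of rho "real N powr rho"] by (simp add: divide_simps distrib_right)
  finally show ?thesis .
next
  case False
  have "(\<Sum>n<N. real (Suc n) powr (rho - 1)) \<le> (\<Sum>n<N. real N powr (rho - 1))"
    using False by (intro sum_mono powr_mono2) auto
  also have "\<dots> = real N powr rho"
  proof (cases "N = 0")
    case True then show ?thesis using False by simp
  next
    case False
    then show ?thesis by (simp add: powr_mult_base)
  qed
  also have "\<dots> \<le> (1 + 1/rho) * real N powr rho"
    using assms by (simp add: algebra_simps)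
  finally show ?thesis .
qed

lemma tail_pow:
  assumes "0 < rho" "N \<ge> 1"
  shows "(\<Sum>n<K. if Suc n \<le> N then 0 else real (Suc n) powr (-1-rho)) \<le> real N powr (-rho) / rho"
proof -
  have "(\<Sum>n<K. if Suc n \<le> N then 0 else real (Suc n) powr (-1-rho))
        \<le> (real N powr (-rho) - real (max N K) powr (-rho)) / rho"
  proof (induction K)
    case 0 then show ?case using assms by simp
  next
    case (Suc K)
    show ?case
    proof (cases "Suc K \<le> N")
      case True
      then have "max N (Suc K) = max N K" by simp
      then show ?thesis using Suc True by simp
    next
      case False
      then have m: "max N (Suc K) = Suc K" "max N K = K" by auto
      have "rho * real (Suc K) powr (-1-rho) \<le> (real (Suc K) - 1) powr (-rho) - real (Suc K) powr (-rho)"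
        using assms False by (intro ineq_convex) auto
      then have "real (Suc K) powr (-1-rho) \<le> (real K powr (-rho) - real (Suc K) powr (-rho)) / rho"
        using assms by (simp add: field_simps)
      then show ?thesis using Suc False m by (simp add: diff_divide_distrib)
    qed
  qed
  also have "\<dots> \<le> real N powr (-rho) / rho"
    using assms by (intro divide_right_mono) auto
  finally show ?thesis .
qed

lemma all_pow:
  assumes "0 < rho"
  shows "(\<Sum>n<K. real (Suc n) powr (-1-rho)) \<le> 1 + 1/rho"
proof -
  have "(\<Sum>n<K. real (Suc n) powr (-1-rho)) \<le> 1 + 1/rho - (if K = 0 then 1 + 1/rho else real K powr (-rho) / rho)"
  proof (induction K)
    case 0 then show ?case by simp
  next
    case (Suc K)
    show ?case
    proof (cases "K = 0")
      case True then show ?thesis by simp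
    next
      case False
      have "rho * real (Suc K) powr (-1-rho) \<le> (real (Suc K) - 1) powr (-rho) - real (Suc K) powr (-rho)"
        using assms False by (intro ineq_convex) auto
      then have "real (Suc K) powr (-1-rho) \<le> (real K powr (-rho) - real (Suc K) powr (-rho)) / rho"
        using assms by (simp add: field_simps)
      then show ?thesis using Suc False by (simp add: diff_divide_distrib)
    qed
  qed
  also have "\<dots> \<le> 1 + 1/rho" using assms by auto
  finally show ?thesis .
qed



lemma amgm_sum:
  fixes x y :: "nat \<Rightarrow> real" and th X Y :: real
  assumes "finite A" "\<And>i. 0 \<le> x i" "\<And>i. 0 \<le> y i" "0 < th" "th < 1"
    and X: "(\<Sum>i\<in>A. if c i then x i else 0) \<le> X"
    and Y: "(\<Sum>i\<in>A. if c i then y i else 0) \<le> Y" and "0 < Y"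
  shows "(\<Sum>i\<in>A. if c i then x i powr th * y i powr (1-th) else 0) \<le> Y powr (1-th) * (X + 1)"
proof -
  have "(\<Sum>i\<in>A. if c i then x i powr th * y i powr (1-th) else 0)
      \<le> (\<Sum>i\<in>A. Y powr (1-th) * (if c i then x i else 0) + Y powr (-th) * (if c i then y i else 0))"
    using assms by (intro sum_mono) (auto intro: amgm_scaled)
  also have "\<dots> = Y powr (1-th) * (\<Sum>i\<in>A. if c i then x i else 0) + Y powr (-th) * (\<Sum>i\<in>A. if c i then y i else 0)"
    by (simp add: sum.distrib sum_distrib_left)
  also have "\<dots> \<le> Y powr (1-th) * X + Y powr (-th) * Y"
    using X Y by (intro add_mono mult_left_mono) auto
  also have "Y powr (-th) * Y = Y powr (1-th)"
    using powr_add[of Y 1 "-th"] \<open>0 < Y\<close> by (simp add: algebra_simps)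
  finally show ?thesis by (simp add: algebra_simps)
qed

lemma term_identity:
  fixes b :: real and l d :: nat
  assumes "d \<ge> 1" "q > 0" "qd > 0" "b \<ge> 0" "l \<ge> 1"
  shows "real l powr (tau d q t * q) * b powr q
     = (real l powr (tau d qd sd * qd) * b powr qd) powr (q/qd) * real l powr (q*(t-sd)/d - 1 + q/qd)"
proof -
  have l: "real l > 0" using assms by auto
  have "(real l powr (tau d qd sd * qd) * b powr qd) powr (q/qd)
      = real l powr (tau d qd sd * qd * (q/qd)) * b powr q"
    using assms by (simp add: powr_mult powr_powr)
  moreover have "real l powr (tau d qd sd * qd * (q/qd)) * real l powr (q*(t-sd)/d - 1 + q/qd)
      = real l powr (tau d q t * q)"
  proof -
    have "tau d qd sd * qd * (q/qd) + (q*(t-sd)/d - 1 + q/qd) = tau d q t * q"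
      using assms unfolding tau_def by (simp add: field_simps)
    then show ?thesis using l by (simp add: powr_add[symmetric])
  qed
  ultimately show ?thesis by (simp add: algebra_simps)
qed

lemma choose_N:
  fixes kappa q Ct :: real
  assumes "kappa > 0" "q > 0" "Ct > 0"
  shows "\<exists>C1\<ge>1. \<forall>eps. 0 < eps \<and> eps < 1 \<longrightarrow>
     (\<exists>N::nat. N \<ge> 1 \<and> Ct * real N powr (-q*kappa) \<le> eps powr q \<and> real N \<le> 2 * (C1/eps) powr (1/kappa))"
proof (intro exI[of _ "max 1 (Ct powr (1/q))"] conjI allI impI)
  define C1 where "C1 = max 1 (Ct powr (1/q))"
  show "max 1 (Ct powr (1/q)) \<ge> 1" by simp
  fix eps :: real assume e: "0 < eps \<and> eps < 1"
  define R where "R = (C1/eps) powr (1/kappa)"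
  have C1: "C1 \<ge> 1" by (simp add: C1_def)
  have "C1/eps \<ge> 1" using e C1 by (simp add: field_simps)
  then have R1: "R \<ge> 1" unfolding R_def using assms by (simp add: ge_one_powr_ge_zero)
  define N where "N = nat \<lceil>R\<rceil>"
  have NR: "real N \<ge> R" "real N \<le> R + 1" using R1 unfolding N_def by linarith+
  have N1: "N \<ge> 1" using NR R1 by linarith
  have "real N powr (-q*kappa) \<le> R powr (-q*kappa)"
    using NR R1 assms by (intro powr_mono2') auto
  also have "R powr (-q*kappa) = (C1/eps) powr (-q)"
    unfolding R_def using assms by (simp add: powr_powr)
  also have "\<dots> = eps powr q / C1 powr q"
    using e C1 by (simp add: powr_divide powr_minus divide_simps)
  finally have A: "real N powr (-q*kappa) \<le> eps powr q / C1 powr q" .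
  have "Ct = (Ct powr (1/q)) powr q" using assms by (simp add: powr_powr)
  also have "\<dots> \<le> C1 powr q" unfolding C1_def using assms by (intro powr_mono2) auto
  finally have B: "Ct \<le> C1 powr q" .
  have "Ct * real N powr (-q*kappa) \<le> C1 powr q * (eps powr q / C1 powr q)"
    using A B assms by (intro mult_mono) auto
  also have "\<dots> = eps powr q" using C1 by simp
  finally show "\<exists>N::nat. N \<ge> 1 \<and> Ct * real N powr (-q*kappa) \<le> eps powr q \<and> real N \<le> 2 * (max 1 (Ct powr (1/q))/eps) powr (1/kappa)"
    using N1 NR R1 unfolding R_def C1_def by (intro exI[of _ N]) auto
qed

lemma pow_N_bound:
  fixes e kappa C1 eps :: real
  assumes "e \<ge> 0" "kappa > 0" "C1 \<ge> 1" "eps > 0" "N \<ge> 1" "N \<le> 2 * (C1/eps) powr (1/kappa)"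
  shows "N powr e \<le> 2 powr e * C1 powr (e/kappa) * eps powr (-(e/kappa))"
proof -
  have "N powr e \<le> (2 * (C1/eps) powr (1/kappa)) powr e"
    using assms by (intro powr_mono2) auto
  also have "\<dots> = 2 powr e * C1 powr (e/kappa) * eps powr (-(e/kappa))"
    using assms by (simp add: powr_mult powr_powr powr_divide powr_minus divide_simps)
  finally show ?thesis .
qed



lemma sum_cond_bound:
  fixes f x :: "nat \<Rightarrow> real"
  assumes "\<And>n. c n \<Longrightarrow> f n \<le> B * x n" "\<And>n. 0 \<le> x n" "B \<ge> 0" "(\<Sum>n<K. x n) \<le> M"
  shows "(\<Sum>n<K. if c n then f n else 0) \<le> B * M"
proof -
  have "(\<Sum>n<K. if c n then f n else 0) \<le> (\<Sum>n<K. B * x n)"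
    using assms by (intro sum_mono) auto
  also have "\<dots> = B * (\<Sum>n<K. x n)" by (simp add: sum_distrib_left)
  also have "\<dots> \<le> B * M" using assms by (intro mult_left_mono) auto
  finally show ?thesis .
qed

lemma summable_basics:
  fixes x :: "nat \<Rightarrow> real"
  assumes "summable x" "\<And>n. 0 \<le> x n"
  shows "\<And>n. x n \<le> suminf x" "\<And>K. (\<Sum>n<K. x n) \<le> suminf x" "0 \<le> suminf x"
proof -
  fix n show "x n \<le> suminf x" using sum_le_suminf[of x "{n}"] assms by auto
next
  fix K show "(\<Sum>n<K. x n) \<le> suminf x" using sum_le_suminf[of x "{..<K}"] assms by auto
next
  show "0 \<le> suminf x" using suminf_nonneg assms by auto
qed

lemma coreA:
  fixes b :: "nat \<Rightarrow> real" and d :: nat and q qd s s' sd mu kappa :: real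
  assumes d: "d \<ge> 1" and q: "q \<ge> 1" "qd \<ge> 1" "qd \<le> q" and b: "\<And>l. b l \<ge> 0"
    and summ: "summable (\<lambda>n. real (Suc n) powr (tau d qd sd * qd) * b (Suc n) powr qd)"
    and kappa: "kappa = (sd - s')/d + 1/q - 1/qd" "kappa > 0"
    and mu: "mu = (s - sd)/d - 1/q + 1/qd"
  shows "\<exists>C>0. \<exists>e0>0. \<forall>eps. 0 < eps \<and> eps < e0 \<longrightarrow> (\<exists>N.
     (\<forall>K. (\<Sum>n<K. if Suc n \<le> N then 0 else real (Suc n) powr (tau d q s' * q) * b (Suc n) powr q) \<le> eps powr q) \<and>
     (\<forall>K. (\<Sum>n<K. if Suc n \<le> N then real (Suc n) powr (tau d q s * q) * b (Suc n) powr q else 0)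
          \<le> C * (if mu \<le> 0 then 1 else eps powr (-(mu/kappa) * q))))"
proof -
  define x where "x l = real l powr (tau d qd sd * qd) * b l powr qd" for l
  define th where "th = q/qd"
  have th: "th \<ge> 1" using q by (simp add: th_def)
  have xnn: "\<And>l. 0 \<le> x l" using b by (simp add: x_def)
  have summ': "summable (\<lambda>n. x (Suc n))" using summ by (simp add: x_def)
  define M where "M = suminf (\<lambda>n. x (Suc n))"
  note SB = summable_basics[OF summ' xnn, folded M_def]
  define Mt where "Mt = M + 1"
  have Mt: "Mt > 0" "M \<le> Mt" using SB(3) by (auto simp: Mt_def)
  have xth: "x (Suc n) powr th \<le> Mt powr (th-1) * x (Suc n)" for n
  proof (cases "x (Suc n) = 0")
    case True then show ?thesis using th by simp
  next
    case False
    then have xp: "x (Suc n) > 0" using xnn[of "Suc n"] by auto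
    have "x (Suc n) powr th = x (Suc n) powr (th-1) * x (Suc n)"
      using powr_add[of "x (Suc n)" "th-1" 1] xp by simp
    also have "\<dots> \<le> Mt powr (th-1) * x (Suc n)"
      using SB(1)[of n] Mt th xp by (intro mult_right_mono powr_mono2) auto
    finally show ?thesis .
  qed
  have ident: "real (Suc n) powr (tau d q t * q) * b (Suc n) powr q
      = x (Suc n) powr th * real (Suc n) powr (q*(t-sd)/d - 1 + th)" for n t
    unfolding x_def th_def using term_identity[of d q qd "b (Suc n)" "Suc n" t sd] d q b by auto
  have g1: "q*(s'-sd)/d - 1 + th = -q*kappa" using d q unfolding kappa th_def by (simp add: field_simps)
  have g2: "q*(s-sd)/d - 1 + th = q*mu" using d q unfolding mu th_def by (simp add: field_simps)
  have MtM: "Mt powr (th-1) * M \<le> Mt powr th"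
  proof -
    have "Mt powr (th-1) * M \<le> Mt powr (th-1) * Mt" using Mt by (intro mult_left_mono) auto
    also have "\<dots> = Mt powr th" using Mt powr_add[of Mt "th-1" 1] by simp
    finally show ?thesis .
  qed
  obtain C1 where C1: "C1 \<ge> 1" and C1N: "\<And>eps. 0 < eps \<and> eps < 1 \<Longrightarrow>
     (\<exists>N::nat. N \<ge> 1 \<and> Mt powr th * real N powr (-q*kappa) \<le> eps powr q \<and> real N \<le> 2 * (C1/eps) powr (1/kappa))"
    using choose_N[of kappa q "Mt powr th"] kappa q Mt by auto
  define C where "C = Mt powr th * (if mu \<le> 0 then 1 else 2 powr (q*mu) * C1 powr (q*mu/kappa))"
  have Cpos: "C > 0" using Mt C1 by (simp add: C_def)
  have main: "\<exists>N. (\<forall>K. (\<Sum>n<K. if Suc n \<le> N then 0 else real (Suc n) powr (tau d q s' * q) * b (Suc n) powr q) \<le> eps powr q) \<and>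
     (\<forall>K. (\<Sum>n<K. if Suc n \<le> N then real (Suc n) powr (tau d q s * q) * b (Suc n) powr q else 0)
          \<le> C * (if mu \<le> 0 then 1 else eps powr (-(mu/kappa) * q)))" if e: "0 < eps \<and> eps < 1" for eps
  proof -
    obtain N :: nat where N: "N \<ge> 1" "Mt powr th * real N powr (-q*kappa) \<le> eps powr q"
       "real N \<le> 2 * (C1/eps) powr (1/kappa)" using C1N[OF e] by auto
    show "\<exists>N. (\<forall>K. (\<Sum>n<K. if Suc n \<le> N then 0 else real (Suc n) powr (tau d q s' * q) * b (Suc n) powr q) \<le> eps powr q) \<and>
     (\<forall>K. (\<Sum>n<K. if Suc n \<le> N then real (Suc n) powr (tau d q s * q) * b (Suc n) powr q else 0)
          \<le> C * (if mu \<le> 0 then 1 else eps powr (-(mu/kappa) * q)))"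
    proof (intro exI[of _ N] conjI allI)
      fix K
      have "(\<Sum>n<K. if \<not> Suc n \<le> N then real (Suc n) powr (tau d q s' * q) * b (Suc n) powr q else 0)
          \<le> (Mt powr (th-1) * real N powr (-q*kappa)) * M"
      proof (rule sum_cond_bound[OF _ _ _ SB(2)])
        fix n assume "\<not> Suc n \<le> N"
        then have "real (Suc n) powr (-q*kappa) \<le> real N powr (-q*kappa)"
          using N kappa q by (intro powr_mono2') auto
        then show "real (Suc n) powr (tau d q s' * q) * b (Suc n) powr q \<le> Mt powr (th-1) * real N powr (-q*kappa) * x (Suc n)"
          unfolding ident g1 using xth[of n] xnn[of "Suc n"] Mt
          by (smt (verit, ccfv_SIG) mult.commute mult.left_commute mult_mono powr_ge_zero)
      qed (use xnn Mt in auto)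
      also have "\<dots> \<le> Mt powr th * real N powr (-q*kappa)"
        using MtM by (smt (verit) mult.assoc mult.commute mult_left_mono powr_ge_zero)
      also have "\<dots> \<le> eps powr q" using N by simp
      finally show "(\<Sum>n<K. if Suc n \<le> N then 0 else real (Suc n) powr (tau d q s' * q) * b (Suc n) powr q) \<le> eps powr q"
        by (smt (verit, ccfv_SIG) sum.cong)
    next
      fix K
      show "(\<Sum>n<K. if Suc n \<le> N then real (Suc n) powr (tau d q s * q) * b (Suc n) powr q else 0)
          \<le> C * (if mu \<le> 0 then 1 else eps powr (-(mu/kappa) * q))"
      proof (cases "mu \<le> 0")
        case True
        have "(\<Sum>n<K. if Suc n \<le> N then real (Suc n) powr (tau d q s * q) * b (Suc n) powr q else 0)
            \<le> Mt powr (th-1) * M"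
        proof (rule sum_cond_bound[OF _ _ _ SB(2)])
          fix n
          have "q*mu \<le> 0" using True q by (simp add: mult_nonneg_nonpos)
          then have "real (Suc n) powr (q*mu) \<le> real (Suc n) powr 0" by (intro powr_mono) auto
          then have "real (Suc n) powr (q*mu) \<le> 1" by simp
          then show "real (Suc n) powr (tau d q s * q) * b (Suc n) powr q \<le> Mt powr (th-1) * x (Suc n)"
            unfolding ident g2 using xth[of n] xnn[of "Suc n"] Mt
            by (smt (verit, ccfv_SIG) mult.commute mult_left_le_one_le powr_ge_zero)
        qed (use xnn Mt in auto)
        also have "\<dots> \<le> C * (if mu \<le> 0 then 1 else eps powr (-(mu/kappa) * q))"
          using MtM True by (simp add: C_def)
        finally show ?thesis .
      next
        case False
        have "(\<Sum>n<K. if Suc n \<le> N then real (Suc n) powr (tau d q s * q) * b (Suc n) powr q else 0)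
            \<le> (Mt powr (th-1) * real N powr (q*mu)) * M"
        proof (rule sum_cond_bound[OF _ _ _ SB(2)])
          fix n assume "Suc n \<le> N"
          then have "real (Suc n) powr (q*mu) \<le> real N powr (q*mu)"
            using False q by (intro powr_mono2) auto
          then show "real (Suc n) powr (tau d q s * q) * b (Suc n) powr q \<le> Mt powr (th-1) * real N powr (q*mu) * x (Suc n)"
            unfolding ident g2 using xth[of n] xnn[of "Suc n"] Mt
            by (smt (verit, ccfv_SIG) mult.commute mult.left_commute mult_mono powr_ge_zero)
        qed (use xnn Mt in auto)
        also have "\<dots> \<le> Mt powr th * real N powr (q*mu)"
          using MtM by (smt (verit) mult.assoc mult.commute mult_left_mono powr_ge_zero)
        also have "\<dots> \<le> Mt powr th * (2 powr (q*mu) * C1 powr (q*mu/kappa) * eps powr (-(q*mu/kappa)))"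
          using pow_N_bound[of "q*mu" kappa C1 eps "real N"] False q kappa C1 e N
          by (intro mult_left_mono) auto
        also have "\<dots> = C * (if mu \<le> 0 then 1 else eps powr (-(mu/kappa) * q))"
          using False by (simp add: C_def algebra_simps)
        finally show ?thesis .
      qed
    qed
  qed
  show ?thesis
    apply (rule exI[of _ C]) apply (rule conjI[OF Cpos]) apply (rule exI[of _ 1])
    using main by auto
qed



lemma amgm_apply:
  fixes x :: "nat \<Rightarrow> real"
  assumes th: "0 < th" "th < 1" and x: "\<And>n. 0 \<le> x n" "(\<Sum>n<K. x n) \<le> M"
    and Y: "(\<Sum>n<K. if c n then real (Suc n) powr e else 0) \<le> Y" "Y > 0"
  shows "(\<Sum>n<K. if c n then x n powr th * real (Suc n) powr ((1-th)*e) else 0) \<le> Y powr (1-th) * (M+1)"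
proof -
  have eq: "real (Suc n) powr ((1-th)*e) = (real (Suc n) powr e) powr (1-th)" for n
    by (simp add: powr_powr mult.commute)
  have X: "(\<Sum>n<K. if c n then x n else 0) \<le> M"
  proof -
    have "(\<Sum>n<K. if c n then x n else 0) \<le> (\<Sum>n<K. x n)" using x by (intro sum_mono) auto
    then show ?thesis using x by linarith
  qed
  show ?thesis unfolding eq
    by (rule amgm_sum[OF _ x(1) _ th X Y(1) Y(2)]) auto
qed

lemma coreB:
  fixes b :: "nat \<Rightarrow> real" and d :: nat and q qd s s' sd :: real
  assumes d: "d \<ge> 1" and q: "q \<ge> 1" "qd \<ge> 1" "q < qd" and b: "\<And>l. b l \<ge> 0"
    and summ: "summable (\<lambda>n. real (Suc n) powr (tau d qd sd * qd) * b (Suc n) powr qd)"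
    and sd: "sd > s'"
  shows "\<exists>C>0. \<exists>e0>0. \<forall>eps. 0 < eps \<and> eps < e0 \<longrightarrow> (\<exists>N.
     (\<forall>K. (\<Sum>n<K. if Suc n \<le> N then 0 else real (Suc n) powr (tau d q s' * q) * b (Suc n) powr q) \<le> eps powr q) \<and>
     (\<forall>K. (\<Sum>n<K. if Suc n \<le> N then real (Suc n) powr (tau d q s * q) * b (Suc n) powr q else 0)
          \<le> C * (if s < sd then 1
                  else if s = sd then (- ln eps) powr (1 - q / qd)
                  else eps powr (- ((s - sd) / (sd - s')) * min q qd))))"
proof -
  define x where "x l = real l powr (tau d qd sd * qd) * b l powr qd" for l
  define th where "th = q/qd"
  have th: "0 < th" "th < 1" using q by (auto simp: th_def)
  have xnn: "\<And>l. 0 \<le> x l" using b by (simp add: x_def)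
  have summ': "summable (\<lambda>n. x (Suc n))" using summ by (simp add: x_def)
  define M where "M = suminf (\<lambda>n. x (Suc n))"
  note SB = summable_basics[OF summ' xnn, folded M_def]
  have ident: "real (Suc n) powr (tau d q t * q) * b (Suc n) powr q
      = x (Suc n) powr th * real (Suc n) powr (q*(t-sd)/d - 1 + th)" for n t
    unfolding x_def th_def using term_identity[of d q qd "b (Suc n)" "Suc n" t sd] d q b by auto
  define kappa where "kappa = (sd - s')/d"
  have kappa: "kappa > 0" using sd d by (simp add: kappa_def)
  define rt where "rt = q*(sd-s')/(d*(1-th))"
  have rt: "rt > 0" using sd d q th by (simp add: rt_def)
  have g1: "q*(s'-sd)/d - 1 + th = (1-th)*(-1-rt)" using d th unfolding rt_def by (simp add: field_simps)
  have rtk: "rt*(1-th) = q*kappa" using d th unfolding rt_def kappa_def by (simp add: field_simps)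
  define Ct where "Ct = rt powr (th-1) * (M+1)"
  have Ct: "Ct > 0" using rt SB(3) by (simp add: Ct_def)
  obtain C1 where C1: "C1 \<ge> 1" and C1N: "\<And>eps. 0 < eps \<and> eps < 1 \<Longrightarrow>
     (\<exists>N::nat. N \<ge> 1 \<and> Ct * real N powr (-q*kappa) \<le> eps powr q \<and> real N \<le> 2 * (C1/eps) powr (1/kappa))"
    using choose_N[of kappa q Ct] kappa q Ct by auto
  have tail: "(\<Sum>n<K. if Suc n \<le> N then 0 else real (Suc n) powr (tau d q s' * q) * b (Suc n) powr q)
      \<le> Ct * real N powr (-q*kappa)" if N: "N \<ge> 1" for N K
  proof -
    have "(\<Sum>n<K. if Suc n \<le> N then 0 else real (Suc n) powr (tau d q s' * q) * b (Suc n) powr q)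
       = (\<Sum>n<K. if \<not> Suc n \<le> N then x (Suc n) powr th * real (Suc n) powr ((1-th)*(-1-rt)) else 0)"
      unfolding ident g1 by (intro sum.cong) auto
    also have "\<dots> \<le> (real N powr (-rt) / rt) powr (1-th) * (M+1)"
    proof (rule amgm_apply[OF th xnn SB(2)])
      show "(\<Sum>n<K. if \<not> Suc n \<le> N then real (Suc n) powr (-1-rt) else 0) \<le> real N powr (-rt) / rt"
        using tail_pow[OF rt N, of K] by (smt (verit, ccfv_SIG) sum.cong)
      show "real N powr (-rt) / rt > 0" using N rt by simp
    qed
    also have "\<dots> = Ct * real N powr (-q*kappa)"
    proof -
      have "(real N powr (-rt) / rt) powr (1-th) = real N powr (-rt*(1-th)) / rt powr (1-th)"
        using N rt by (simp add: powr_divide powr_powr)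
      also have "\<dots> = real N powr (-q*kappa) * rt powr (th-1)"
      proof -
        have "rt powr (th-1) * rt powr (1-th) = 1" using rt by (simp add: powr_add[symmetric])
        then show ?thesis using rtk rt by (simp add: divide_simps)
      qed
      finally show ?thesis by (simp add: Ct_def algebra_simps)
    qed
    finally show ?thesis .
  qed
  define C2 where "C2 = 1 + ln 2 + ln C1 / kappa + 1/kappa"
  define Cs where "Cs = (if s < sd then (1 + 1 / (q*(sd-s)/(d*(1-th)))) powr (1-th) * (M+1)
        else if s = sd then C2 powr (1-th) * (M+1)
        else (1 + 1 / (q*(s-sd)/(d*(1-th)))) powr (1-th) * (M+1) * (2 powr (q*(s-sd)/d) * C1 powr (q*(s-sd)/d/kappa)))"
  have C2: "C2 > 0" using C1 kappa by (simp add: C2_def add_pos_nonneg)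
  have p1: "1 + 1 / (q*(sd-s)/(d*(1-th))) > 0" if "s < sd"
    using that th d q by (intro add_pos_pos) (auto intro!: divide_pos_pos mult_pos_pos)
  have p2: "1 + 1 / (q*(s-sd)/(d*(1-th))) > 0" if "s > sd"
    using that th d q by (intro add_pos_pos) (auto intro!: divide_pos_pos mult_pos_pos)
  have Cs: "Cs > 0" unfolding Cs_def using SB(3) C1 C2 p1 p2
    by (auto intro!: mult_pos_pos)
  have head: "(\<Sum>n<K. if Suc n \<le> N then real (Suc n) powr (tau d q s * q) * b (Suc n) powr q else 0)
          \<le> Cs * (if s < sd then 1
                  else if s = sd then (- ln eps) powr (1 - q / qd)
                  else eps powr (- ((s - sd) / (sd - s')) * min q qd))"
    if N: "N \<ge> 1" "real N \<le> 2 * (C1/eps) powr (1/kappa)" and e: "0 < eps" "eps < exp (-1)" for N K eps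
  proof (cases "s < sd")
    case True
    define r where "r = q*(sd-s)/(d*(1-th))"
    have r: "r > 0" using True d q th by (simp add: r_def)
    have g: "q*(s-sd)/d - 1 + th = (1-th)*(-1-r)" using d th unfolding r_def by (simp add: field_simps)
    have "(\<Sum>n<K. if Suc n \<le> N then real (Suc n) powr (tau d q s * q) * b (Suc n) powr q else 0)
       = (\<Sum>n<K. if Suc n \<le> N then x (Suc n) powr th * real (Suc n) powr ((1-th)*(-1-r)) else 0)"
      unfolding ident g by simp
    also have "\<dots> \<le> (1 + 1/r) powr (1-th) * (M+1)"
    proof (rule amgm_apply[OF th xnn SB(2)])
      have "(\<Sum>n<K. if Suc n \<le> N then real (Suc n) powr (-1-r) else 0) \<le> (\<Sum>n<K. real (Suc n) powr (-1-r))"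
        by (intro sum_mono) auto
      then show "(\<Sum>n<K. if Suc n \<le> N then real (Suc n) powr (-1-r) else 0) \<le> 1 + 1/r"
        using all_pow[OF r, of K] by linarith
      show "1 + 1/r > 0" using r by (simp add: add_pos_pos)
    qed
    also have "\<dots> = Cs * (if s < sd then 1
                  else if s = sd then (- ln eps) powr (1 - q / qd)
                  else eps powr (- ((s - sd) / (sd - s')) * min q qd))"
      using True by (simp add: Cs_def r_def)
    finally show ?thesis .
  next
    case False
    show ?thesis
    proof (cases "s = sd")
      case True
      have g: "q*(s-sd)/d - 1 + th = (1-th)*(-1)" using True by simp
      have "(\<Sum>n<K. if Suc n \<le> N then real (Suc n) powr (tau d q s * q) * b (Suc n) powr q else 0)
         = (\<Sum>n<K. if Suc n \<le> N then x (Suc n) powr th * real (Suc n) powr ((1-th)*(-1)) else 0)"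
        unfolding ident g by simp
      also have "\<dots> \<le> (1 + ln (real N)) powr (1-th) * (M+1)"
      proof (rule amgm_apply[OF th xnn SB(2)])
        have "(\<Sum>n<K. if Suc n \<le> N then real (Suc n) powr (-1) else 0) \<le> (\<Sum>n<N. real (Suc n) powr (-1))"
          by (rule sum_cond_le) auto
        also have "\<dots> = (\<Sum>n<N. 1 / real (Suc n))" by (simp add: powr_minus_divide)
        also have "\<dots> \<le> 1 + ln (real N)" using harm_bound N by auto
        finally show "(\<Sum>n<K. if Suc n \<le> N then real (Suc n) powr (-1) else 0) \<le> 1 + ln (real N)" .
        show "1 + ln (real N) > 0" using N by (simp add: add_pos_nonneg)
      qed
      also have "\<dots> \<le> (C2 * (- ln eps)) powr (1-th) * (M+1)"
      proof -
        have "ln eps < ln (exp (-1))" using e by (subst ln_less_cancel_iff) auto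
        then have le1: "- ln eps \<ge> 1" by simp
        have "ln (real N) \<le> ln (2 * (C1/eps) powr (1/kappa))" using N by (intro ln_mono) auto
        also have "\<dots> = ln 2 + (1/kappa) * (ln C1 - ln eps)"
          using C1 e by (simp add: ln_mult ln_powr ln_div)
        finally have "1 + ln (real N) \<le> (1 + ln 2 + ln C1 / kappa) + (1/kappa) * (- ln eps)"
          by (simp add: algebra_simps)
        also have "\<dots> \<le> (1 + ln 2 + ln C1 / kappa) * (- ln eps) + (1/kappa) * (- ln eps)"
        proof -
          have "0 \<le> 1 + ln 2 + ln C1 / kappa" using C1 kappa by (simp add: add_nonneg_nonneg)
          then have "(1 + ln 2 + ln C1 / kappa) * 1 \<le> (1 + ln 2 + ln C1 / kappa) * (- ln eps)"
            using le1 by (intro mult_left_mono) auto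
          then show ?thesis by simp
        qed
        also have "\<dots> = C2 * (- ln eps)" by (simp add: C2_def algebra_simps)
        finally have "1 + ln (real N) \<le> C2 * (- ln eps)" .
        then show ?thesis using N th SB(3)
          by (intro mult_right_mono powr_mono2) (auto simp: add_nonneg_nonneg)
      qed
      also have "\<dots> = Cs * (if s < sd then 1
                  else if s = sd then (- ln eps) powr (1 - q / qd)
                  else eps powr (- ((s - sd) / (sd - s')) * min q qd))"
      proof -
        have "ln eps < ln (exp (-1))" using e by (subst ln_less_cancel_iff) auto
        then have "- ln eps \<ge> 0" by simp
        then have "(C2 * (- ln eps)) powr (1-th) = C2 powr (1-th) * (- ln eps) powr (1-th)"
          using C2 powr_mult[of C2 "- ln eps" "1-th"] by simp
        then show ?thesis using True by (simp add: Cs_def th_def)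
      qed
      finally show ?thesis .
    next
      case False2: False
      have sgt: "s > sd" using False False2 by auto
      define r where "r = q*(s-sd)/(d*(1-th))"
      have r: "r > 0" using sgt d q th by (simp add: r_def)
      have g: "q*(s-sd)/d - 1 + th = (1-th)*(r-1)" using d th unfolding r_def by (simp add: field_simps)
      have rth: "r*(1-th) = q*(s-sd)/d" using d th unfolding r_def by (simp add: field_simps)
      have "(\<Sum>n<K. if Suc n \<le> N then real (Suc n) powr (tau d q s * q) * b (Suc n) powr q else 0)
         = (\<Sum>n<K. if Suc n \<le> N then x (Suc n) powr th * real (Suc n) powr ((1-th)*(r-1)) else 0)"
        unfolding ident g by simp
      also have "\<dots> \<le> ((1 + 1/r) * real N powr r) powr (1-th) * (M+1)"
      proof (rule amgm_apply[OF th xnn SB(2)])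
        have "(\<Sum>n<K. if Suc n \<le> N then real (Suc n) powr (r-1) else 0) \<le> (\<Sum>n<N. real (Suc n) powr (r-1))"
          by (rule sum_cond_le) auto
        also have "\<dots> \<le> (1 + 1/r) * real N powr r" using head_pow[OF r] by auto
        finally show "(\<Sum>n<K. if Suc n \<le> N then real (Suc n) powr (r-1) else 0) \<le> (1 + 1/r) * real N powr r" .
        show "(1 + 1/r) * real N powr r > 0" using N r by (simp add: add_pos_pos)
      qed
      also have "\<dots> = (1 + 1/r) powr (1-th) * (M+1) * real N powr (q*(s-sd)/d)"
        using r N rth by (simp add: powr_mult powr_powr)
      also have "\<dots> \<le> (1 + 1/r) powr (1-th) * (M+1) * (2 powr (q*(s-sd)/d) * C1 powr (q*(s-sd)/d/kappa) * eps powr (-(q*(s-sd)/d/kappa)))"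
        using pow_N_bound[of "q*(s-sd)/d" kappa C1 eps "real N"] sgt q d kappa C1 e N SB(3) r
        by (intro mult_left_mono) (auto simp: add_pos_nonneg)
      also have "\<dots> = Cs * (if s < sd then 1
                  else if s = sd then (- ln eps) powr (1 - q / qd)
                  else eps powr (- ((s - sd) / (sd - s')) * min q qd))"
      proof -
        have "-(q*(s-sd)/d/kappa) = - ((s - sd) / (sd - s')) * min q qd"
          using q d sd unfolding kappa_def by (simp add: field_simps)
        then show ?thesis using sgt by (simp add: Cs_def r_def)
      qed
      finally show ?thesis .
    qed
  qed
  have e1: "exp (-1::real) < 1" by simp
  show ?thesis
  proof (rule exI[of _ Cs], rule conjI[OF Cs], rule exI[of _ "exp (-1)"], rule conjI, simp, intro allI impI)
    fix eps :: real assume e: "0 < eps \<and> eps < exp (-1)"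
    then have "0 < eps \<and> eps < 1" using e1 by linarith
    then obtain N :: nat where N: "N \<ge> 1" "Ct * real N powr (-q*kappa) \<le> eps powr q"
       "real N \<le> 2 * (C1/eps) powr (1/kappa)" using C1N by blast
    show "\<exists>N. (\<forall>K. (\<Sum>n<K. if Suc n \<le> N then 0 else real (Suc n) powr (tau d q s' * q) * b (Suc n) powr q) \<le> eps powr q) \<and>
     (\<forall>K. (\<Sum>n<K. if Suc n \<le> N then real (Suc n) powr (tau d q s * q) * b (Suc n) powr q else 0)
          \<le> Cs * (if s < sd then 1
                  else if s = sd then (- ln eps) powr (1 - q / qd)
                  else eps powr (- ((s - sd) / (sd - s')) * min q qd)))"
    proof (intro exI[of _ N] conjI allI)
      fix K
      show "(\<Sum>n<K. if Suc n \<le> N then 0 else real (Suc n) powr (tau d q s' * q) * b (Suc n) powr q) \<le> eps powr q"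
        using tail[OF N(1), of K] N(2) by linarith
      show "(\<Sum>n<K. if Suc n \<le> N then real (Suc n) powr (tau d q s * q) * b (Suc n) powr q else 0)
          \<le> Cs * (if s < sd then 1
                  else if s = sd then (- ln eps) powr (1 - q / qd)
                  else eps powr (- ((s - sd) / (sd - s')) * min q qd))"
        using head[OF N(1) N(3)] e by blast
    qed
  qed
qed



lemma Lp_norm_nonneg: "Lp_norm p T f \<ge> 0"
  by (simp add: Lp_norm_def)

lemma Lp_pow_zero: "p > 0 \<Longrightarrow> Lp_pow p T (\<lambda>t. 0) = 0"
  by (simp add: Lp_pow_def)

lemma Lp_norm_zero: "p > 0 \<Longrightarrow> Lp_norm p T (\<lambda>t. 0) = 0"
  by (simp add: Lp_norm_def Lp_pow_zero)

lemma Lp_norm_uminus: "Lp_norm p T (\<lambda>t. - f t) = Lp_norm p T f"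
  by (simp add: Lp_norm_def Lp_pow_def)

lemma in_Lp_zero: "p > 0 \<Longrightarrow> in_Lp p T (\<lambda>t. 0)"
  by (simp add: in_Lp_def Lp_pow_zero set_borel_measurable_def)

lemma in_Lp_uminus: "in_Lp p T f \<Longrightarrow> in_Lp p T (\<lambda>t. - f t)"
  unfolding in_Lp_def set_borel_measurable_def
  by (auto simp: Lp_pow_def intro: borel_measurable_uminus)

lemma final_from_core:
  fixes ud :: "nat \<Rightarrow> real \<Rightarrow> real" and R :: "real \<Rightarrow> real"
  assumes q: "q \<ge> 1" and H1: "\<And>l. l \<ge> 1 \<Longrightarrow> in_Lp q T (ud l)"
  and core: "\<exists>C>0. \<exists>e0>0. \<forall>eps. 0 < eps \<and> eps < e0 \<longrightarrow> (\<exists>N.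
     (\<forall>K. (\<Sum>n<K. if Suc n \<le> N then 0 else real (Suc n) powr (tau d q s' * q) * Lp_norm q T (ud (Suc n)) powr q) \<le> eps powr q) \<and>
     (\<forall>K. (\<Sum>n<K. if Suc n \<le> N then real (Suc n) powr (tau d q s * q) * Lp_norm q T (ud (Suc n)) powr q else 0)
          \<le> C * R eps))"
  shows "\<exists>C>0. \<exists>e0>0. \<forall>eps. 0 < eps \<and> eps < e0 \<longrightarrow>
         admissible d T s s' q ud eps \<noteq> {} \<and>
         (INF h\<in>admissible d T s s' q ud eps. besov_norm d T s q q h powr q) \<le> C * R eps"
proof -
  obtain C e0 where C: "C > 0" "e0 > 0" and CN: "\<And>eps. 0 < eps \<and> eps < e0 \<Longrightarrow> (\<exists>N.
     (\<forall>K. (\<Sum>n<K. if Suc n \<le> N then 0 else real (Suc n) powr (tau d q s' * q) * Lp_norm q T (ud (Suc n)) powr q) \<le> eps powr q) \<and>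
     (\<forall>K. (\<Sum>n<K. if Suc n \<le> N then real (Suc n) powr (tau d q s * q) * Lp_norm q T (ud (Suc n)) powr q else 0)
          \<le> C * R eps))" using core by blast
  have q0: "q > 0" using q by simp
  have main: "admissible d T s s' q ud eps \<noteq> {} \<and>
         (INF h\<in>admissible d T s s' q ud eps. besov_norm d T s q q h powr q) \<le> C * R eps"
    if e: "0 < eps \<and> eps < e0" for eps
  proof -
    obtain N where T1: "\<And>K. (\<Sum>n<K. if Suc n \<le> N then 0 else real (Suc n) powr (tau d q s' * q) * Lp_norm q T (ud (Suc n)) powr q) \<le> eps powr q"
      and T2: "\<And>K. (\<Sum>n<K. if Suc n \<le> N then real (Suc n) powr (tau d q s * q) * Lp_norm q T (ud (Suc n)) powr q else 0) \<le> C * R eps"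
      using CN[OF e] by blast
    define h where "h = (\<lambda>l t. if l \<le> N then ud l t else 0)"
    have bt_h: "besov_term d T s q q h (Suc n) = (if Suc n \<le> N then real (Suc n) powr (tau d q s * q) * Lp_norm q T (ud (Suc n)) powr q else 0)" for n
      by (auto simp: besov_term_def h_def Lp_norm_zero q0)
    have diff: "(\<lambda>t. h l t - ud l t) = (if l \<le> N then (\<lambda>t. 0) else (\<lambda>t. - ud l t))" for l
      by (auto simp: h_def)
    have bt_d: "besov_term d T s' q q (\<lambda>l t. h l t - ud l t) (Suc n) = (if Suc n \<le> N then 0 else real (Suc n) powr (tau d q s' * q) * Lp_norm q T (ud (Suc n)) powr q)" for n
      unfolding besov_term_def diff by (auto simp: Lp_norm_zero q0 Lp_norm_uminus)
    have nn1: "0 \<le> besov_term d T s q q h (Suc n)" for n unfolding bt_h by (simp add: Lp_norm_nonneg)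
    have nn2: "0 \<le> besov_term d T s' q q (\<lambda>l t. h l t - ud l t) (Suc n)" for n unfolding bt_d by (simp add: Lp_norm_nonneg)
    have S1: "summable (\<lambda>n. besov_term d T s q q h (Suc n))"
      by (rule summableI_nonneg_bounded[OF nn1]) (use T2 bt_h in simp)
    have S2: "summable (\<lambda>n. besov_term d T s' q q (\<lambda>l t. h l t - ud l t) (Suc n))"
      by (rule summableI_nonneg_bounded[OF nn2]) (use T1 bt_d in simp)
    have hl: "h l = (if l \<le> N then ud l else (\<lambda>t. 0))" for l
      by (auto simp: h_def)
    have hB: "h \<in> besov d T s q q"
      unfolding besov_def using S1 H1 by (auto simp: hl in_Lp_zero q0)
    have dB: "(\<lambda>l t. h l t - ud l t) \<in> besov d T s' q q"
      unfolding besov_def using S2 H1 by (auto simp: diff in_Lp_zero q0 in_Lp_uminus)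
    have suml: "(\<Sum>n. besov_term d T s' q q (\<lambda>l t. h l t - ud l t) (Suc n)) \<le> eps powr q"
      by (rule suminf_le_const[OF S2]) (use T1 bt_d in simp)
    have "besov_norm d T s' q q (\<lambda>l t. h l t - ud l t) \<le> (eps powr q) powr (1/q)"
      unfolding besov_norm_def using suml q0 suminf_nonneg[OF S2 nn2]
      by (intro powr_mono2) auto
    also have "\<dots> = eps" using e q0 by (simp add: powr_powr)
    finally have hA: "h \<in> admissible d T s s' q ud eps"
      unfolding admissible_def using hB dB by auto
    have sumh: "(\<Sum>n. besov_term d T s q q h (Suc n)) \<le> C * R eps"
      by (rule suminf_le_const[OF S1]) (use T2 bt_h in simp)
    have "(INF h\<in>admissible d T s s' q ud eps. besov_norm d T s q q h powr q) \<le> besov_norm d T s q q h powr q"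
      by (rule cINF_lower[OF _ hA]) (auto intro!: bdd_belowI[of _ 0])
    also have "\<dots> = (\<Sum>n. besov_term d T s q q h (Suc n))"
      unfolding besov_norm_def using q0 suminf_nonneg[OF S1 nn1] by (simp add: powr_powr)
    finally show ?thesis using sumh hA by auto
  qed
  show ?thesis using C main by blast
qed



lemma zero_by_limit:
  fixes B A a :: real
  assumes "a \<noteq> 0" "A \<ge> 0" "\<And>P. P > 0 \<Longrightarrow> B \<le> P powr a * A"
  shows "B \<le> 0"
proof (rule ccontr)
  assume "\<not> B \<le> 0"
  then have B: "B > 0" by simp
  define P where "P = (B / (2*A+1)) powr (1/a)"
  have P: "P > 0" using B assms by (simp add: P_def)
  have "P powr a = B / (2*A+1)" using B assms by (simp add: P_def powr_powr)
  then have "B \<le> B / (2*A+1) * A" using assms(3)[OF P] by simp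
  moreover have "B / (2*A+1) * A < B"
  proof -
    have "B * A < B * (2*A+1)" using B assms by simp
    then show ?thesis using assms by (simp add: field_simps)
  qed
  ultimately show False by simp
qed

lemma pointwise_holder:
  fixes v q qd P :: real
  assumes "0 < q" "q < qd" "P > 0"
  shows "\<bar>v\<bar> powr q \<le> P powr (1 - q/qd) * \<bar>v\<bar> powr qd + P powr (-(q/qd))"
proof -
  have "(\<bar>v\<bar> powr qd) powr (q/qd) * 1 powr (1 - q/qd) \<le> P powr (1 - q/qd) * \<bar>v\<bar> powr qd + P powr (-(q/qd)) * 1"
    using assms by (intro amgm_scaled) auto
  moreover have "(\<bar>v\<bar> powr qd) powr (q/qd) = \<bar>v\<bar> powr q" using assms by (simp add: powr_powr)
  ultimately show ?thesis by simp
qed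

lemma Lp_holder_raw:
  assumes T: "T \<in> sets lborel" and q: "0 < q" "q < qd" and f: "set_borel_measurable lborel T f" and P: "P > 0"
  shows "Lp_pow q T f \<le> ennreal (P powr (1 - q/qd)) * Lp_pow qd T f + ennreal (P powr (-(q/qd))) * emeasure lborel T"
proof -
  define F where "F t = indicator T t *\<^sub>R f t" for t
  have Fm: "F \<in> borel_measurable lborel" using f unfolding set_borel_measurable_def F_def by simp
  have eq: "(\<lambda>t. ennreal (\<bar>f t\<bar> powr qd) * indicator T t) = (\<lambda>t. ennreal (\<bar>F t\<bar> powr qd))"
    using q by (auto simp: F_def indicator_def fun_eq_iff)
  have m1: "(\<lambda>t. ennreal (\<bar>f t\<bar> powr qd) * indicator T t) \<in> borel_measurable lborel"
    unfolding eq using Fm by measurable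
  have m2: "(\<lambda>t. indicator T t :: ennreal) \<in> borel_measurable lborel" using T by measurable
  have "Lp_pow q T f = (\<integral>\<^sup>+ t. ennreal (\<bar>f t\<bar> powr q) * indicator T t \<partial>lborel)"
    by (simp add: Lp_pow_def)
  also have "\<dots> \<le> (\<integral>\<^sup>+ t. ennreal (P powr (1 - q/qd)) * (ennreal (\<bar>f t\<bar> powr qd) * indicator T t)
                      + ennreal (P powr (-(q/qd))) * indicator T t \<partial>lborel)"
  proof (rule nn_integral_mono)
    fix t
    show "ennreal (\<bar>f t\<bar> powr q) * indicator T t \<le> ennreal (P powr (1 - q/qd)) * (ennreal (\<bar>f t\<bar> powr qd) * indicator T t)
                      + ennreal (P powr (-(q/qd))) * indicator T t"
    proof (cases "t \<in> T")
      case True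
      have "ennreal (\<bar>f t\<bar> powr q) \<le> ennreal (P powr (1 - q/qd) * \<bar>f t\<bar> powr qd + P powr (-(q/qd)))"
        using pointwise_holder[OF q P, of "f t"] by (intro ennreal_leI) auto
      also have "\<dots> = ennreal (P powr (1 - q/qd)) * ennreal (\<bar>f t\<bar> powr qd) + ennreal (P powr (-(q/qd)))"
        by (simp add: ennreal_plus ennreal_mult)
      finally show ?thesis using True by simp
    qed simp
  qed
  also have "\<dots> = ennreal (P powr (1 - q/qd)) * Lp_pow qd T f + ennreal (P powr (-(q/qd))) * emeasure lborel T"
    using m1 m2 T by (simp add: nn_integral_add nn_integral_cmult Lp_pow_def)
  finally show ?thesis .
qed



lemma Bb_lemma:
  fixes B mu c th :: real
  assumes th: "0 < th" "th < 1" and mu: "mu \<ge> 0" and c: "c \<ge> 0" and B: "B \<ge> 0"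
    and Braw: "\<And>P. P > 0 \<Longrightarrow> B \<le> P powr (1-th) * c + P powr (-th) * mu"
  shows "B \<le> 2 * mu powr (1-th) * c powr th"
proof (cases "mu = 0 \<or> c = 0")
  case True
  then have "B \<le> 0"
  proof
    assume m0: "mu = 0"
    show "B \<le> 0"
    proof (rule zero_by_limit[of "1-th" c B])
      show "1 - th \<noteq> 0" using th by simp
      show "c \<ge> 0" by (rule c)
      fix P :: real assume "P > 0" then show "B \<le> P powr (1-th) * c" using Braw m0 by simp
    qed
  next
    assume c0: "c = 0"
    show "B \<le> 0"
    proof (rule zero_by_limit[of "-th" mu B])
      show "- th \<noteq> 0" using th by simp
      show "mu \<ge> 0" by (rule mu)
      fix P :: real assume "P > 0" then show "B \<le> P powr (-th) * mu" using Braw c0 by simp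
    qed
  qed
  moreover have "0 \<le> 2 * mu powr (1-th) * c powr th" by simp
  ultimately show ?thesis by linarith
next
  case False
  then have mc: "mu > 0" "c > 0" using mu c by auto
  have cc: "c powr th * c powr (1-th) = c" using mc by (simp add: powr_add[symmetric])
  have mm: "mu powr th * mu powr (1-th) = mu" using mc by (simp add: powr_add[symmetric])
  have A1: "(mu/c) powr (1-th) * c = mu powr (1-th) * c powr th"
  proof -
    have "(mu/c) powr (1-th) * c = mu powr (1-th) / c powr (1-th) * (c powr th * c powr (1-th))"
      using mc cc by (simp add: powr_divide)
    also have "\<dots> = mu powr (1-th) * c powr th" using mc by simp
    finally show ?thesis .
  qed
  have A2: "(mu/c) powr (-th) * mu = mu powr (1-th) * c powr th"
  proof -
    have "(mu/c) powr (-th) = c powr th / mu powr th"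
      using mc by (simp add: powr_divide powr_minus)
    then have "(mu/c) powr (-th) * mu = c powr th / mu powr th * (mu powr th * mu powr (1-th))"
      using mm by simp
    also have "\<dots> = mu powr (1-th) * c powr th" using mc by simp
    finally show ?thesis .
  qed
  have "B \<le> (mu/c) powr (1-th) * c + (mu/c) powr (-th) * mu" using Braw mc by simp
  then show ?thesis unfolding A1 A2 by (simp add: algebra_simps)
qed


lemma ennr_aux:
  fixes a b c mu :: real assumes "a \<ge> 0" "b \<ge> 0" "c \<ge> 0" "mu \<ge> 0"
  shows "ennreal a * ennreal c + ennreal b * ennreal mu = ennreal (a * c + b * mu)"
proof -
  have "ennreal (a * c + b * mu) = ennreal (a*c) + ennreal (b*mu)"
    using assms by (intro ennreal_plus) auto
  also have "ennreal (a*c) = ennreal a * ennreal c" using assms by (rule_tac ennreal_mult) auto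
  also have "ennreal (b*mu) = ennreal b * ennreal mu" using assms by (rule_tac ennreal_mult) auto
  finally show ?thesis by simp
qed


lemma holder_norm:
  assumes T: "T \<in> sets lborel" "emeasure lborel T < \<infinity>" and q: "1 \<le> q" "q < qd" and f: "in_Lp qd T f"
  shows "in_Lp q T f \<and> Lp_norm q T f powr qd \<le> (2 * measure lborel T powr (1 - q/qd)) powr (qd/q) * Lp_norm qd T f powr qd"
proof -
  define th where "th = q/qd"
  have th: "0 < th" "th < 1" using q by (auto simp: th_def)
  define mu where "mu = measure lborel T"
  have mu: "mu \<ge> 0" "emeasure lborel T = ennreal mu"
    using T by (auto simp: mu_def emeasure_eq_ennreal_measure)
  have fm: "set_borel_measurable lborel T f" and cfin: "Lp_pow qd T f < \<infinity>" using f by (auto simp: in_Lp_def)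
  define c where "c = enn2real (Lp_pow qd T f)"
  have c: "c \<ge> 0" "Lp_pow qd T f = ennreal c" using cfin by (auto simp: c_def ennreal_enn2real)
  have raw: "Lp_pow q T f \<le> ennreal (P powr (1-th) * c + P powr (-th) * mu)" if P: "P > 0" for P
  proof -
    have "Lp_pow q T f \<le> ennreal (P powr (1 - q/qd)) * Lp_pow qd T f + ennreal (P powr (-(q/qd))) * emeasure lborel T"
      using Lp_holder_raw[OF T(1) _ q(2) fm P] q by auto
    also have "\<dots> = ennreal (P powr (1-th) * c + P powr (-th) * mu)"
      using c mu ennr_aux[of "P powr (1-th)" "P powr (-th)" c mu] by (simp add: th_def)
    finally show ?thesis .
  qed
  have Bfin: "Lp_pow q T f < \<infinity>"
  proof -
    have "Lp_pow q T f \<le> ennreal (1 powr (1-th) * c + 1 powr (-th) * mu)" using raw[of 1] by simp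
    also have "\<dots> < \<infinity>" by simp
    finally show ?thesis .
  qed
  have inq: "in_Lp q T f" using fm Bfin by (simp add: in_Lp_def)
  define B where "B = enn2real (Lp_pow q T f)"
  have B: "B \<ge> 0" "Lp_pow q T f = ennreal B" using Bfin by (auto simp: B_def ennreal_enn2real)
  have Braw: "B \<le> P powr (1-th) * c + P powr (-th) * mu" if "P > 0" for P
  proof -
    have nn: "0 \<le> P powr (1-th) * c + P powr (-th) * mu" using c mu by simp
    have "ennreal B \<le> ennreal (P powr (1-th) * c + P powr (-th) * mu)" using raw[OF that] B(2) by simp
    then show ?thesis using ennreal_le_iff[OF nn] by blast
  qed
  have Bb: "B \<le> 2 * mu powr (1-th) * c powr th"
    by (rule Bb_lemma[OF th mu(1) c(1) B(1) Braw])
  have L1: "Lp_norm q T f = B powr (1/q)" by (simp add: Lp_norm_def B_def)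
  have L2: "Lp_norm qd T f = c powr (1/qd)" by (simp add: Lp_norm_def c_def)
  have "Lp_norm q T f powr qd = B powr (qd/q)"
    unfolding L1 using q by (simp add: powr_powr)
  also have "\<dots> \<le> (2 * mu powr (1-th) * c powr th) powr (qd/q)"
    using Bb B q by (intro powr_mono2) auto
  also have "\<dots> = (2 * mu powr (1-th)) powr (qd/q) * (c powr th) powr (qd/q)"
    using c mu by (intro powr_mult)
  also have "(c powr th) powr (qd/q) = c"
    using c q by (simp add: powr_powr th_def)
  also have "c = Lp_norm qd T f powr qd"
    unfolding L2 using c q by (simp add: powr_powr)
  finally show ?thesis using inq by (simp add: mu_def th_def)
qed



lemma part_i:
  fixes d :: nat and T :: "real set" and Tmax :: real
    and q qd s s' sd :: real and ud :: "nat \<Rightarrow> real \<Rightarrow> real"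
  assumes d: "d \<ge> 1"
    and T: "T \<subseteq> {0..Tmax}" "T \<in> sets lborel"
    and q: "1 \<le> q" "q \<le> 2" and qd: "1 \<le> qd" "qd \<le> 2"
    and sd: "sd > s'"
    and ud: "ud \<in> besov d T sd qd qd"
    and qq: "qd \<ge> q"
  shows "\<exists>C>0. \<exists>e0>0. \<forall>eps. 0 < eps \<and> eps < e0 \<longrightarrow>
         admissible d T s s' q ud eps \<noteq> {} \<and>
         (INF h\<in>admissible d T s s' q ud eps. besov_norm d T s q q h powr q)
           \<le> C * (if s < sd then 1
                  else if s = sd then (- ln eps) powr (1 - q / qd)
                  else eps powr (- ((s - sd) / (sd - s')) * min q qd))"
proof -
  have Tfin: "emeasure lborel T < \<infinity>"
    by (rule emeasure_bounded_finite, rule bounded_subset[OF _ T(1)]) simp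
  have udL: "\<And>l. l \<ge> 1 \<Longrightarrow> in_Lp qd T (ud l)"
    and summ: "summable (\<lambda>n. besov_term d T sd qd qd ud (Suc n))"
    using ud by (auto simp: besov_def)
  show ?thesis
  proof (cases "q = qd")
    case True
    define kappa where "kappa = (sd - s')/d + 1/q - 1/qd"
    define mu where "mu = (s - sd)/d - 1/q + 1/qd"
    have kappa: "kappa > 0" using sd d True by (simp add: kappa_def)
    have summ': "summable (\<lambda>n. real (Suc n) powr (tau d qd sd * qd) * Lp_norm q T (ud (Suc n)) powr qd)"
      using summ True by (simp add: besov_term_def)
    have core: "\<exists>C>0. \<exists>e0>0. \<forall>eps. 0 < eps \<and> eps < e0 \<longrightarrow> (\<exists>N.
     (\<forall>K. (\<Sum>n<K. if Suc n \<le> N then 0 else real (Suc n) powr (tau d q s' * q) * Lp_norm q T (ud (Suc n)) powr q) \<le> eps powr q) \<and>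
     (\<forall>K. (\<Sum>n<K. if Suc n \<le> N then real (Suc n) powr (tau d q s * q) * Lp_norm q T (ud (Suc n)) powr q else 0)
          \<le> C * (if mu \<le> 0 then 1 else eps powr (-(mu/kappa) * q))))"
      by (rule coreA[OF d q(1) qd(1) _ Lp_norm_nonneg summ' kappa_def kappa mu_def]) (use True in simp)
    have H1: "\<And>l. l \<ge> 1 \<Longrightarrow> in_Lp q T (ud l)" using udL True by simp
    obtain C e0 where C: "C > 0" "e0 > 0" and CE: "\<And>eps. 0 < eps \<and> eps < e0 \<Longrightarrow>
         admissible d T s s' q ud eps \<noteq> {} \<and>
         (INF h\<in>admissible d T s s' q ud eps. besov_norm d T s q q h powr q) \<le> C * (if mu \<le> 0 then 1 else eps powr (-(mu/kappa) * q))"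
      using final_from_core[OF q(1) H1 core] by blast
    show ?thesis
    proof (rule exI[of _ C], rule conjI[OF C(1)], rule exI[of _ "min e0 1"], intro conjI allI impI)
      show "min e0 1 > 0" using C by simp
      fix eps :: real assume e: "0 < eps \<and> eps < min e0 1"
      have eq: "(if mu \<le> 0 then 1 else eps powr (-(mu/kappa) * q)) = (if s < sd then 1
                  else if s = sd then (- ln eps) powr (1 - q / qd)
                  else eps powr (- ((s - sd) / (sd - s')) * min q qd))"
      proof -
        have "ln eps < 0" using e by simp
        moreover have "mu \<le> 0 \<longleftrightarrow> s \<le> sd" using d True by (simp add: mu_def divide_le_0_iff)
        moreover have "mu/kappa = (s - sd)/(sd - s')" using d True sd by (simp add: mu_def kappa_def field_simps)
        ultimately show ?thesis using True q by auto
      qed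
      show "admissible d T s s' q ud eps \<noteq> {}" using CE e by auto
      show "(INF h\<in>admissible d T s s' q ud eps. besov_norm d T s q q h powr q)
           \<le> C * (if s < sd then 1
                  else if s = sd then (- ln eps) powr (1 - q / qd)
                  else eps powr (- ((s - sd) / (sd - s')) * min q qd))"
        using CE[of eps] e unfolding eq by auto
    qed
  next
    case False
    then have qlt: "q < qd" using qq by simp
    define K where "K = (2 * measure lborel T powr (1 - q/qd)) powr (qd/q)"
    have hol: "in_Lp q T (ud l) \<and> Lp_norm q T (ud l) powr qd \<le> K * Lp_norm qd T (ud l) powr qd" if "l \<ge> 1" for l
      unfolding K_def by (rule holder_norm[OF T(2) Tfin q(1) qlt udL[OF that]])
    have summ': "summable (\<lambda>n. real (Suc n) powr (tau d qd sd * qd) * Lp_norm q T (ud (Suc n)) powr qd)"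
    proof (rule summable_comparison_test'[where N=0])
      show "summable (\<lambda>n. K * besov_term d T sd qd qd ud (Suc n))" using summ by (rule summable_mult)
      fix n :: nat
      have "real (Suc n) powr (tau d qd sd * qd) * Lp_norm q T (ud (Suc n)) powr qd
          \<le> real (Suc n) powr (tau d qd sd * qd) * (K * Lp_norm qd T (ud (Suc n)) powr qd)"
        using hol[of "Suc n"] by (intro mult_left_mono) auto
      then show "norm (real (Suc n) powr (tau d qd sd * qd) * Lp_norm q T (ud (Suc n)) powr qd) \<le> K * besov_term d T sd qd qd ud (Suc n)"
        by (simp add: besov_term_def algebra_simps)
    qed
    have H1: "\<And>l. l \<ge> 1 \<Longrightarrow> in_Lp q T (ud l)" using hol by blast
    show ?thesis
      by (rule final_from_core[OF q(1) H1 coreB[OF d q(1) qd(1) qlt Lp_norm_nonneg summ' sd]])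
  qed
qed

lemma part_ii:
  fixes d :: nat and T :: "real set" and Tmax :: real
    and q qd s s' sd :: real and ud :: "nat \<Rightarrow> real \<Rightarrow> real"
  assumes d: "d \<ge> 1"
    and q: "1 \<le> q" "q \<le> 2" and qd: "1 \<le> qd" "qd \<le> 2"
    and hyp: "qd < q" "ud \<in> besov d T sd qd q" "sd > s' - real d / q + real d / qd"
  shows "\<exists>C>0. \<exists>e0>0. \<forall>eps. 0 < eps \<and> eps < e0 \<longrightarrow>
         admissible d T s s' q ud eps \<noteq> {} \<and>
         (INF h\<in>admissible d T s s' q ud eps. besov_norm d T s q q h powr q)
           \<le> C * (if s \<le> sd + real d / q - real d / qd then 1
                  else eps powr (- (((s - sd) / real d - 1 / q + 1 / qd)
                                    / ((sd - s') / real d + 1 / q - 1 / qd)) * q))"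
proof -
  define kappa where "kappa = (sd - s') / real d + 1 / q - 1 / qd"
  define mu where "mu = (s - sd) / real d - 1 / q + 1 / qd"
  have H1: "\<And>l. l \<ge> 1 \<Longrightarrow> in_Lp q T (ud l)"
    and summ: "summable (\<lambda>n. besov_term d T sd qd q ud (Suc n))"
    using hyp by (auto simp: besov_def)
  have summ': "summable (\<lambda>n. real (Suc n) powr (tau d qd sd * qd) * Lp_norm q T (ud (Suc n)) powr qd)"
    using summ by (simp add: besov_term_def)
  have qdq: "qd \<le> q" using hyp(1) by simp
  have kappa: "kappa > 0"
  proof -
    have "(sd - s') > - real d / q + real d / qd" using hyp by simp
    then have "(sd - s') / real d > (- real d / q + real d / qd) / real d" using d
      by (intro divide_strict_right_mono) auto
    also have "(- real d / q + real d / qd) / real d = - 1/q + 1/qd" using d by (simp add: field_simps)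
    finally show ?thesis by (simp add: kappa_def)
  qed
  have eq: "(if mu \<le> 0 then 1 else eps powr (-(mu/kappa) * q)) = (if s \<le> sd + real d / q - real d / qd then 1
                  else eps powr (- (((s - sd) / real d - 1 / q + 1 / qd)
                                    / ((sd - s') / real d + 1 / q - 1 / qd)) * q))" for eps
  proof -
    have "mu \<le> 0 \<longleftrightarrow> (s - sd) / real d \<le> 1/q - 1/qd" unfolding mu_def by arith
    also have "\<dots> \<longleftrightarrow> s - sd \<le> (1/q - 1/qd) * real d" using d by (simp add: divide_le_eq)
    also have "\<dots> \<longleftrightarrow> s \<le> sd + real d / q - real d / qd" by (simp add: algebra_simps)
    finally show ?thesis by (simp add: mu_def kappa_def)
  qed
  have "\<exists>C>0. \<exists>e0>0. \<forall>eps. 0 < eps \<and> eps < e0 \<longrightarrow>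
         admissible d T s s' q ud eps \<noteq> {} \<and>
         (INF h\<in>admissible d T s s' q ud eps. besov_norm d T s q q h powr q)
           \<le> C * (if mu \<le> 0 then 1 else eps powr (-(mu/kappa) * q))"
    by (rule final_from_core[OF q(1) H1 coreA[OF d q(1) qd(1) qdq Lp_norm_nonneg summ' kappa_def kappa mu_def]])
  then show ?thesis unfolding eq .
qed

theorem lemmaA3:
  fixes d :: nat and T :: "real set" and Tmax :: real
    and q qd s s' sd :: real and ud :: "nat \<Rightarrow> real \<Rightarrow> real"
  assumes d: "d \<ge> 1"
    and T: "T \<subseteq> {0..Tmax}" "T \<in> sets lborel"
    and q: "1 \<le> q" "q \<le> 2" and qd: "1 \<le> qd" "qd \<le> 2"
    and sd: "sd > s'"
    and ud: "ud \<in> besov d T sd qd qd"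
  shows
   "(qd \<ge> q \<longrightarrow>
      (\<exists>C>0. \<exists>e0>0. \<forall>eps. 0 < eps \<and> eps < e0 \<longrightarrow>
         admissible d T s s' q ud eps \<noteq> {} \<and>
         (INF h\<in>admissible d T s s' q ud eps. besov_norm d T s q q h powr q)
           \<le> C * (if s < sd then 1
                  else if s = sd then (- ln eps) powr (1 - q / qd)
                  else eps powr (- ((s - sd) / (sd - s')) * min q qd))))
    \<and>
    (qd < q \<and> ud \<in> besov d T sd qd q \<and> sd > s' - real d / q + real d / qd \<longrightarrow>
      (\<exists>C>0. \<exists>e0>0. \<forall>eps. 0 < eps \<and> eps < e0 \<longrightarrow>
         admissible d T s s' q ud eps \<noteq> {} \<and>
         (INF h\<in>admissible d T s s' q ud eps. besov_norm d T s q q h powr q)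
           \<le> C * (if s \<le> sd + real d / q - real d / qd then 1
                  else eps powr (- (((s - sd) / real d - 1 / q + 1 / qd)
                                    / ((sd - s') / real d + 1 / q - 1 / qd)) * q))))"
  using part_i[OF d T q qd sd ud] part_ii[OF d q qd] by blast

end
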